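(* The set function $A\mapsto\bar\Lambda(A,P)$ on $2^E$ is monotone (i.e. $\bar\Lambda(A,P)\le\bar\Lambda(B,P)$ for $A\subseteq B\subseteq E$) and submodular (i.e. $\bar\Lambda(A\cup\{e\},P)-\bar\Lambda(A,P)\ge\bar\Lambda(B\cup\{e\},P)-\bar\Lambda(B,P)$ for all $A\subseteq B\subseteq E$, $e\in E$).
   Context: $G=(V,E)$ is a simple directed acyclic graph with capacities $C\in\mathbb{R}_{\ge0}^E$ and $\gamma$ is a budget with $0<\gamma\le\min_eC(e)$. User paths $P=\{p_1,\dots,p_k\}$ are directed paths (edge sets, not necessarily disjoint) with initial values $\lambda_i\ge0$, $\sum_{i:e\in p_i}\lambda_i\le C(e)$ for all $e$. Let $E_1$ be the set of edges lying on exactly one user path and $E_2$ the set of edges lying on at least two user paths. For $A\subseteq E$ let $\tilde C_A(e)=C(e)-\gamma\mathbf{1}_{\{e\in A\}}$. Define $\tilde\lambda^{(1)}_{iA}=\min\big(\lambda_i,\min_{e\in p_i\cap E_1}\tilde C_A(e)\big)$ and $\tilde\lambda^{(2)}_{iA}=\tilde\lambda^{(1)}_{iA}\cdot\prod_{e\in p_i\cap E_2,\ \tilde C_A(e)\le\sum_{j:e\in p_j}\lambda_j}\frac{\tilde C_A(e)}{\sum_{j:e\in p_j}\lambda_j}$, and $\bar\Lambda(A,P)=\sum_i\lambda_i-\sum_i\tilde\lambda^{(2)}_{iA}$. *)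

theory Defs
  imports Complex_Main
begin

definition simple_dag :: "'v set \<Rightarrow> ('v \<times> 'v) set \<Rightarrow> bool" where
  "simple_dag V E \<longleftrightarrow> finite V \<and> E \<subseteq> V \<times> V \<and> acyclic E"

definition is_dpath :: "('v \<times> 'v) set \<Rightarrow> ('v \<times> 'v) set \<Rightarrow> bool" where
  "is_dpath E p \<longleftrightarrow> (\<exists>vs. length vs \<ge> 2 \<and> distinct vs \<and>
      (\<forall>j. j + 1 < length vs \<longrightarrow> (vs ! j, vs ! (j + 1)) \<in> E) \<and>
      p = {(vs ! j, vs ! (j + 1)) | j. j + 1 < length vs})"

text \<open>Users are indexed by i < k; p i is the path of user i, lam i its initial value.\<close>
definition load :: "nat \<Rightarrow> (nat \<Rightarrow> ('v \<times> 'v) set) \<Rightarrow> (nat \<Rightarrow> real) \<Rightarrow> ('v \<times> 'v) \<Rightarrow> real" where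
  "load k p lam e = (\<Sum>j\<in>{j. j < k \<and> e \<in> p j}. lam j)"

definition E1 :: "('v \<times> 'v) set \<Rightarrow> nat \<Rightarrow> (nat \<Rightarrow> ('v \<times> 'v) set) \<Rightarrow> ('v \<times> 'v) set" where
  "E1 E k p = {e \<in> E. card {i. i < k \<and> e \<in> p i} = 1}"

definition E2 :: "('v \<times> 'v) set \<Rightarrow> nat \<Rightarrow> (nat \<Rightarrow> ('v \<times> 'v) set) \<Rightarrow> ('v \<times> 'v) set" where
  "E2 E k p = {e \<in> E. card {i. i < k \<and> e \<in> p i} \<ge> 2}"

definition Ctil :: "(('v \<times> 'v) \<Rightarrow> real) \<Rightarrow> real \<Rightarrow> ('v \<times> 'v) set \<Rightarrow> ('v \<times> 'v) \<Rightarrow> real" where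
  "Ctil C \<gamma> A e = C e - (if e \<in> A then \<gamma> else 0)"

text \<open>min(lam_i, min over p_i \<inter> E1 of Ctil_A); the min over an empty set is +infinity,
  so it is just lam_i then.\<close>
definition lam1 :: "('v \<times> 'v) set \<Rightarrow> (('v \<times> 'v) \<Rightarrow> real) \<Rightarrow> real \<Rightarrow> nat \<Rightarrow>
    (nat \<Rightarrow> ('v \<times> 'v) set) \<Rightarrow> (nat \<Rightarrow> real) \<Rightarrow> ('v \<times> 'v) set \<Rightarrow> nat \<Rightarrow> real" where
  "lam1 E C \<gamma> k p lam A i = Min (insert (lam i) (Ctil C \<gamma> A ` (p i \<inter> E1 E k p)))"

definition lam2 :: "('v \<times> 'v) set \<Rightarrow> (('v \<times> 'v) \<Rightarrow> real) \<Rightarrow> real \<Rightarrow> nat \<Rightarrow>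
    (nat \<Rightarrow> ('v \<times> 'v) set) \<Rightarrow> (nat \<Rightarrow> real) \<Rightarrow> ('v \<times> 'v) set \<Rightarrow> nat \<Rightarrow> real" where
  "lam2 E C \<gamma> k p lam A i = lam1 E C \<gamma> k p lam A i *
     (\<Prod>e\<in>{e \<in> p i \<inter> E2 E k p. Ctil C \<gamma> A e \<le> load k p lam e}.
        Ctil C \<gamma> A e / load k p lam e)"

definition Lambda_bar :: "('v \<times> 'v) set \<Rightarrow> (('v \<times> 'v) \<Rightarrow> real) \<Rightarrow> real \<Rightarrow> nat \<Rightarrow>
    (nat \<Rightarrow> ('v \<times> 'v) set) \<Rightarrow> (nat \<Rightarrow> real) \<Rightarrow> ('v \<times> 'v) set \<Rightarrow> real" where
  "Lambda_bar E C \<gamma> k p lam A = (\<Sum>i<k. lam i) - (\<Sum>i<k. lam2 E C \<gamma> k p lam A i)"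

end

theory Submission
  imports Defs
begin

definition mm :: "(('v \<times> 'v) \<Rightarrow> real) \<Rightarrow> real \<Rightarrow> ('v \<times> 'v) set \<Rightarrow> real \<Rightarrow> ('v \<times> 'v) set \<Rightarrow> real" where
  "mm C \<gamma> S1 l A = Min (insert l (Ctil C \<gamma> A ` S1))"

lemma mm_anti:
  assumes "finite S1" "A \<subseteq> B" "0 \<le> \<gamma>"
  shows "mm C \<gamma> S1 l B \<le> mm C \<gamma> S1 l A"
proof -
  have fin: "finite (insert l (Ctil C \<gamma> A ` S1))" using assms by simp
  have "mm C \<gamma> S1 l A \<in> insert l (Ctil C \<gamma> A ` S1)" unfolding mm_def by (rule Min_in[OF fin]) simp
  then consider "mm C \<gamma> S1 l A = l" | e where "e\<in>S1" "mm C \<gamma> S1 l A = Ctil C \<gamma> A e" by auto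
  then show ?thesis
  proof cases
    case 1 then show ?thesis unfolding mm_def using assms by simp
  next
    case 2
    have "mm C \<gamma> S1 l B \<le> Ctil C \<gamma> B e" unfolding mm_def using assms 2 by (intro Min_le) auto
    also have "\<dots> \<le> Ctil C \<gamma> A e" using assms unfolding Ctil_def by auto
    finally show ?thesis using 2 by simp
  qed
qed

lemma mm_nonneg:
  assumes "finite S1" "0 \<le> l" "0 \<le> \<gamma>" "\<forall>e\<in>S1. \<gamma> \<le> C e"
  shows "0 \<le> mm C \<gamma> S1 l A"
  unfolding mm_def using assms by (auto simp: Ctil_def)

lemma mm_insert_out:
  assumes "e \<notin> S1"
  shows "mm C \<gamma> S1 l (A \<union> {e}) = mm C \<gamma> S1 l A"
proof -
  have "Ctil C \<gamma> (A \<union> {e}) ` S1 = Ctil C \<gamma> A ` S1"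
    using assms by (intro image_cong) (auto simp: Ctil_def)
  then show ?thesis unfolding mm_def by simp
qed

lemma mm_insert_in:
  assumes "finite S1" "e \<in> S1" "0 \<le> \<gamma>"
  shows "mm C \<gamma> S1 l (A \<union> {e}) = min (mm C \<gamma> S1 l A) (C e - \<gamma>)"
proof (rule antisym)
  have "mm C \<gamma> S1 l (A \<union> {e}) \<le> mm C \<gamma> S1 l A" by (rule mm_anti) (use assms in auto)
  moreover have "mm C \<gamma> S1 l (A \<union> {e}) \<le> C e - \<gamma>"
  proof -
    have "mm C \<gamma> S1 l (A \<union> {e}) \<le> Ctil C \<gamma> (A \<union> {e}) e"
      unfolding mm_def using assms by (intro Min_le) auto
    then show ?thesis by (simp add: Ctil_def)
  qed
  ultimately show "mm C \<gamma> S1 l (A \<union> {e}) \<le> min (mm C \<gamma> S1 l A) (C e - \<gamma>)" by simp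
next
  have fin: "finite (insert l (Ctil C \<gamma> (A \<union> {e}) ` S1))" using assms by simp
  have "mm C \<gamma> S1 l (A \<union> {e}) \<in> insert l (Ctil C \<gamma> (A \<union> {e}) ` S1)"
    unfolding mm_def by (rule Min_in[OF fin]) simp
  then consider "mm C \<gamma> S1 l (A \<union> {e}) = l"
    | e' where "e'\<in>S1" "mm C \<gamma> S1 l (A \<union> {e}) = Ctil C \<gamma> (A \<union> {e}) e'" by auto
  then show "min (mm C \<gamma> S1 l A) (C e - \<gamma>) \<le> mm C \<gamma> S1 l (A \<union> {e})"
  proof cases
    case 1
    have "mm C \<gamma> S1 l A \<le> l" unfolding mm_def using assms by simp
    then show ?thesis using 1 by simp
  next
    case 2
    show ?thesis
    proof (cases "e' = e")
      case True then show ?thesis using 2 by (simp add: Ctil_def)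
    next
      case False
      have "mm C \<gamma> S1 l A \<le> Ctil C \<gamma> A e'" unfolding mm_def using assms 2 by (intro Min_le) auto
      then show ?thesis using 2 False by (simp add: Ctil_def)
    qed
  qed
qed

lemma PP_anti:
  fixes r :: "'a \<Rightarrow> real"
  assumes "finite S2" "A \<subseteq> B" "\<forall>e\<in>S2. 0 \<le> r e \<and> r e \<le> 1"
  shows "(\<Prod>e\<in>S2 \<inter> B. r e) \<le> (\<Prod>e\<in>S2 \<inter> A. r e)"
proof -
  have "(\<Prod>e\<in>S2 \<inter> B. r e) = (\<Prod>e\<in>S2 \<inter> B - S2 \<inter> A. r e) * (\<Prod>e\<in>S2 \<inter> A. r e)"
    using assms by (intro prod.subset_diff) auto
  also have "\<dots> \<le> 1 * (\<Prod>e\<in>S2 \<inter> A. r e)"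
    using assms by (intro mult_right_mono prod_le_1 prod_nonneg) auto
  finally show ?thesis by simp
qed

lemma PP_nonneg:
  fixes r :: "'a \<Rightarrow> real"
  assumes "\<forall>e\<in>S2. 0 \<le> r e \<and> r e \<le> 1"
  shows "0 \<le> (\<Prod>e\<in>S2 \<inter> A. r e)"
  using assms by (intro prod_nonneg) auto

lemma user:
  fixes r :: "('v \<times> 'v) \<Rightarrow> real"
  assumes "finite S1" "finite S2" "S1 \<inter> S2 = {}" "0 \<le> l" "0 \<le> \<gamma>" "\<forall>e\<in>S1. \<gamma> \<le> C e"
    "\<forall>e\<in>S2. 0 \<le> r e \<and> r e \<le> 1" "A \<subseteq> B"
  defines "f \<equiv> \<lambda>A. mm C \<gamma> S1 l A * (\<Prod>e\<in>S2 \<inter> A. r e)"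
  shows "f B \<le> f A" and "f B - f (B \<union> {e}) \<le> f A - f (A \<union> {e})"
proof -
  have mono: "f Y \<le> f X" if "X \<subseteq> Y" for X Y
    unfolding f_def using assms that
    by (intro mult_mono mm_anti PP_anti mm_nonneg PP_nonneg) auto
  show "f B \<le> f A" using mono assms by simp
  have nn: "0 \<le> f X - f (X \<union> {e})" for X using mono[of X "X \<union> {e}"] by auto
  show "f B - f (B \<union> {e}) \<le> f A - f (A \<union> {e})"
  proof (cases "e \<in> S1")
    case True
    then have e2: "e \<notin> S2" using assms by auto
    have D: "f X - f (X \<union> {e}) = (\<Prod>e\<in>S2 \<inter> X. r e) * max 0 (mm C \<gamma> S1 l X - (C e - \<gamma>))" for X
    proof -
      have s: "S2 \<inter> (X \<union> {e}) = S2 \<inter> X" using e2 by auto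
      have m: "mm C \<gamma> S1 l (X \<union> {e}) = min (mm C \<gamma> S1 l X) (C e - \<gamma>)"
        by (rule mm_insert_in[OF assms(1) True assms(5)])
      have a: "mm C \<gamma> S1 l X - min (mm C \<gamma> S1 l X) (C e - \<gamma>) = max 0 (mm C \<gamma> S1 l X - (C e - \<gamma>))"
        by linarith
      have "f X - f (X \<union> {e}) = (\<Prod>e\<in>S2 \<inter> X. r e) * (mm C \<gamma> S1 l X - min (mm C \<gamma> S1 l X) (C e - \<gamma>))"
        unfolding f_def s m by (simp only: right_diff_distrib mult.commute)
      then show ?thesis unfolding a .
    qed
    have "mm C \<gamma> S1 l B \<le> mm C \<gamma> S1 l A" by (rule mm_anti) (use assms in auto)
    then have mx: "max 0 (mm C \<gamma> S1 l B - (C e - \<gamma>)) \<le> max 0 (mm C \<gamma> S1 l A - (C e - \<gamma>))"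
      by (auto simp: max_def)
    show ?thesis unfolding D
      using assms mx by (intro mult_mono PP_anti PP_nonneg) auto
  next
    case False
    note m = mm_insert_out[OF False]
    show ?thesis
    proof (cases "e \<in> S2 \<and> e \<notin> B")
      case True
      then have eA: "e \<notin> A" using assms by auto
      have D: "f X - f (X \<union> {e}) = mm C \<gamma> S1 l X * (\<Prod>e\<in>S2 \<inter> X. r e) * (1 - r e)"
        if "e \<notin> X" for X
      proof -
        have "S2 \<inter> (X \<union> {e}) = insert e (S2 \<inter> X)" using True by auto
        moreover have "e \<notin> S2 \<inter> X" using that by auto
        ultimately show ?thesis unfolding f_def m using assms
          by (simp add: algebra_simps)
      qed
      show ?thesis unfolding D[OF eA] D[of B, OF conjunct2[OF True]]
        using assms True
        by (intro mult_mono mm_anti PP_anti mm_nonneg PP_nonneg mult_nonneg_nonneg) auto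
    next
      case False2: False
      have "f (B \<union> {e}) = f B"
      proof -
        have "S2 \<inter> (B \<union> {e}) = S2 \<inter> B" using False2 by auto
        then show ?thesis unfolding f_def m by simp
      qed
      then show ?thesis using nn[of A] by simp
    qed
  qed
qed

definition rr :: "(('v \<times> 'v) \<Rightarrow> real) \<Rightarrow> real \<Rightarrow> (('v \<times> 'v) \<Rightarrow> real) \<Rightarrow> ('v \<times> 'v) \<Rightarrow> real" where
  "rr C \<gamma> L e = (if C e - \<gamma> \<le> L e then (C e - \<gamma>) / L e else 1)"

lemma rr_bounds:
  assumes "0 \<le> L e" "\<gamma> \<le> C e"
  shows "0 \<le> rr C \<gamma> L e \<and> rr C \<gamma> L e \<le> 1"
  using assms unfolding rr_def by (auto simp: divide_le_eq_1)

lemma lam2_eq: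
  assumes fin: "finite (p i)" and g: "0 < \<gamma>"
    and h: "\<forall>e\<in>p i \<inter> E2 E k p. 0 \<le> load k p lam e \<and> load k p lam e \<le> C e \<and> \<gamma> \<le> C e"
  shows "lam2 E C \<gamma> k p lam A i = mm C \<gamma> (p i \<inter> E1 E k p) (lam i) A *
     (\<Prod>e\<in>(p i \<inter> E2 E k p) \<inter> A. rr C \<gamma> (load k p lam) e)"
proof -
  let ?S2 = "p i \<inter> E2 E k p"
  let ?L = "load k p lam"
  have fin2: "finite ?S2" using fin by simp
  have "(\<Prod>e\<in>{e \<in> ?S2. Ctil C \<gamma> A e \<le> ?L e}. Ctil C \<gamma> A e / ?L e)
      = (\<Prod>e\<in>?S2. if Ctil C \<gamma> A e \<le> ?L e then Ctil C \<gamma> A e / ?L e else 1)"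
    using fin2 by (rule prod.inter_filter)
  also have "\<dots> = (\<Prod>e\<in>?S2. if e \<in> A then rr C \<gamma> ?L e else 1)"
  proof (rule prod.cong[OF refl])
    fix e assume e: "e \<in> ?S2"
    show "(if Ctil C \<gamma> A e \<le> ?L e then Ctil C \<gamma> A e / ?L e else 1) = (if e \<in> A then rr C \<gamma> ?L e else 1)"
    proof (cases "e \<in> A")
      case True then show ?thesis by (simp add: Ctil_def rr_def)
    next
      case False
      have "0 < C e" using h e g by force
      have "?L e \<le> C e" using h e by auto
      then show ?thesis using False \<open>0 < C e\<close> by (auto simp: Ctil_def)
    qed
  qed
  also have "\<dots> = (\<Prod>e\<in>?S2 \<inter> A. rr C \<gamma> ?L e)"
    using fin2 by (simp add: prod.If_cases)
  finally show ?thesis unfolding lam2_def lam1_def mm_def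
    by (simp add: Int_def)
qed

theorem lemma2:
  fixes V :: "'v set" and E :: "('v \<times> 'v) set" and C :: "('v \<times> 'v) \<Rightarrow> real"
    and \<gamma> :: real and k :: nat and p :: "nat \<Rightarrow> ('v \<times> 'v) set" and lam :: "nat \<Rightarrow> real"
  assumes dag: "simple_dag V E"
    and cap_nonneg: "\<forall>e\<in>E. C e \<ge> 0"
    and gamma_pos: "0 < \<gamma>"
    and gamma_le: "\<forall>e\<in>E. \<gamma> \<le> C e"
    and paths: "\<forall>i<k. is_dpath E (p i)"
    and lam_nonneg: "\<forall>i<k. lam i \<ge> 0"
    and feasible: "\<forall>e\<in>E. load k p lam e \<le> C e"
  shows "(\<forall>A B. A \<subseteq> B \<and> B \<subseteq> E \<longrightarrow>
            Lambda_bar E C \<gamma> k p lam A \<le> Lambda_bar E C \<gamma> k p lam B)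
       \<and> (\<forall>A B e. A \<subseteq> B \<and> B \<subseteq> E \<and> e \<in> E \<longrightarrow>
            Lambda_bar E C \<gamma> k p lam (A \<union> {e}) - Lambda_bar E C \<gamma> k p lam A
              \<ge> Lambda_bar E C \<gamma> k p lam (B \<union> {e}) - Lambda_bar E C \<gamma> k p lam B)"
proof -
  have finE: "finite E"
  proof -
    have "finite V" "E \<subseteq> V \<times> V" using dag unfolding simple_dag_def by auto
    then show ?thesis using finite_subset by blast
  qed
  have sub: "p i \<subseteq> E" if ik: "i < k" for i
  proof
    fix x assume x: "x \<in> p i"
    have "is_dpath E (p i)" using paths ik by blast
    then obtain vs where H1: "\<forall>j. j + 1 < length vs \<longrightarrow> (vs ! j, vs ! (j + 1)) \<in> E"
      and H2: "p i = {(vs ! j, vs ! (j + 1)) | j. j + 1 < length vs}"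
      unfolding is_dpath_def by (elim exE conjE) simp
    from x H2 obtain j where "x = (vs ! j, vs ! (j + 1))" "j + 1 < length vs" by blast
    with H1 show "x \<in> E" by simp
  qed
  have finp: "finite (p i)" if "i < k" for i using sub[OF that] finE by (rule finite_subset)
  have Lnn: "0 \<le> load k p lam e" for e
    unfolding load_def using lam_nonneg by (intro sum_nonneg) auto
  have disj: "E1 E k p \<inter> E2 E k p = {}" unfolding E1_def E2_def by auto
  define f where "f i A = lam2 E C \<gamma> k p lam A i" for i A
  have feq: "f i A = mm C \<gamma> (p i \<inter> E1 E k p) (lam i) A *
     (\<Prod>e\<in>(p i \<inter> E2 E k p) \<inter> A. rr C \<gamma> (load k p lam) e)" if "i < k" for i A
  proof -
    have "\<forall>e\<in>p i \<inter> E2 E k p. 0 \<le> load k p lam e \<and> load k p lam e \<le> C e \<and> \<gamma> \<le> C e"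
      using sub[OF that] Lnn feasible gamma_le by blast
    then show ?thesis unfolding f_def by (rule lam2_eq[where p=p and i=i, OF finp[OF that] gamma_pos])
  qed
  have U: "f i B \<le> f i A \<and> f i B - f i (B \<union> {e}) \<le> f i A - f i (A \<union> {e})"
    if ik: "i < k" and AB: "A \<subseteq> B" for i A B e
  proof -
    have a1: "finite (p i \<inter> E1 E k p)" "finite (p i \<inter> E2 E k p)" using finp[OF ik] by auto
    have a2: "(p i \<inter> E1 E k p) \<inter> (p i \<inter> E2 E k p) = {}" using disj by auto
    have a3: "0 \<le> lam i" using lam_nonneg ik by auto
    have a4: "0 \<le> \<gamma>" using gamma_pos by simp
    have a5: "\<forall>e\<in>p i \<inter> E1 E k p. \<gamma> \<le> C e" using sub[OF ik] gamma_le by auto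
    have a6: "\<forall>e\<in>p i \<inter> E2 E k p. 0 \<le> rr C \<gamma> (load k p lam) e \<and> rr C \<gamma> (load k p lam) e \<le> 1"
    proof
      fix e assume "e \<in> p i \<inter> E2 E k p"
      then have "\<gamma> \<le> C e" using sub[OF ik] gamma_le by auto
      then show "0 \<le> rr C \<gamma> (load k p lam) e \<and> rr C \<gamma> (load k p lam) e \<le> 1"
        by (rule rr_bounds[OF Lnn])
    qed
    show ?thesis unfolding feq[OF ik]
      using user[OF a1 a2 a3 a4 a5 a6 AB] by blast
  qed
  have LB: "Lambda_bar E C \<gamma> k p lam A = (\<Sum>i<k. lam i) - (\<Sum>i<k. f i A)" for A
    unfolding Lambda_bar_def f_def by simp
  show ?thesis
  proof (intro conjI allI impI)
    fix A B assume "A \<subseteq> B \<and> B \<subseteq> E"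
    then show "Lambda_bar E C \<gamma> k p lam A \<le> Lambda_bar E C \<gamma> k p lam B"
    proof -
      have "(\<Sum>i<k. f i B) \<le> (\<Sum>i<k. f i A)" using U \<open>A \<subseteq> B \<and> B \<subseteq> E\<close> by (intro sum_mono) blast
      then show ?thesis unfolding LB by simp
    qed
  next
    fix A B e assume "A \<subseteq> B \<and> B \<subseteq> E \<and> e \<in> E"
    then have "(\<Sum>i<k. f i B - f i (B \<union> {e})) \<le> (\<Sum>i<k. f i A - f i (A \<union> {e}))"
      using U by (intro sum_mono) auto
    then show "Lambda_bar E C \<gamma> k p lam (A \<union> {e}) - Lambda_bar E C \<gamma> k p lam A
              \<ge> Lambda_bar E C \<gamma> k p lam (B \<union> {e}) - Lambda_bar E C \<gamma> k p lam B"
      unfolding LB by (simp add: sum_subtractf)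
  qed
qed

end
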